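(* Let $m\ge2$. There exist traceless $m\times m$ real matrices $A$ and $B$ such that, with \[ V_1(x)=Ax,\quad V_2(x)=Bx,\quad V_3(x)=\begin{pmatrix}0\\ \vdots\\ 0\\ 1\end{pmatrix},\quad V_4(x)=\begin{pmatrix}(x^m)^2\\ 0\\ \vdots\\ 0\end{pmatrix},\quad V_5(x)=\begin{pmatrix}x^1x^m\\ x^2x^m\\ \vdots\\ (x^m)^2\end{pmatrix} \] (where $x=(x^1,\ldots,x^m)$ and $V_5(x)=x^m\,x$), the Lie algebra $\mathrm{Lie}(V_1,\ldots,V_5)$ contains all polynomial vector fields on $\mathbb{R}^m$.
   Context: For smooth vector fields $U,V$ on $\mathbb{R}^m$, the Lie bracket is $[U,V](x)=DV(x)U(x)-DU(x)V(x)$, with $DU$ the Jacobian matrix. $\mathrm{Lie}(U_1,\ldots,U_d)$ is the smallest linear space of vector fields containing $U_1,\ldots,U_d$ and closed under Lie brackets. A polynomial vector field is one whose components are polynomials in $x^1,\ldots,x^m$. A traceless matrix is one with trace zero. *)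

theory Defs
  imports "HOL-Analysis.Analysis"
begin

text \<open>Vector fields on R^m are maps real^'n => real^'n; the index type 'n is finite
and linearly ordered, so its least element is coordinate 1 and its greatest is coordinate m.\<close>

type_synonym 'n vfield = "real^'n \<Rightarrow> real^'n"

definition first_idx :: "'n::{finite,linorder}" where
  "first_idx = Min UNIV"

definition last_idx :: "'n::{finite,linorder}" where
  "last_idx = Max UNIV"

definition lie_bracket :: "'n::finite vfield \<Rightarrow> 'n vfield \<Rightarrow> 'n vfield" where
  "lie_bracket U V = (\<lambda>x. frechet_derivative V (at x) (U x) - frechet_derivative U (at x) (V x))"

inductive_set Lie :: "'n::finite vfield set \<Rightarrow> 'n vfield set" for G where
  gen: "U \<in> G \<Longrightarrow> U \<in> Lie G"
| zero: "(\<lambda>x. 0) \<in> Lie G"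
| add: "U \<in> Lie G \<Longrightarrow> V \<in> Lie G \<Longrightarrow> (\<lambda>x. U x + V x) \<in> Lie G"
| scale: "U \<in> Lie G \<Longrightarrow> (\<lambda>x. c *\<^sub>R U x) \<in> Lie G"
| bracket: "U \<in> Lie G \<Longrightarrow> V \<in> Lie G \<Longrightarrow> lie_bracket U V \<in> Lie G"

inductive poly_fun :: "(real^'n::finite \<Rightarrow> real) \<Rightarrow> bool" where
  const: "poly_fun (\<lambda>x. c)"
| coord: "poly_fun (\<lambda>x. x $ i)"
| add: "poly_fun p \<Longrightarrow> poly_fun q \<Longrightarrow> poly_fun (\<lambda>x. p x + q x)"
| mult: "poly_fun p \<Longrightarrow> poly_fun q \<Longrightarrow> poly_fun (\<lambda>x. p x * q x)"

definition poly_vfield :: "'n::finite vfield \<Rightarrow> bool" where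
  "poly_vfield V \<longleftrightarrow> (\<forall>i. poly_fun (\<lambda>x. V x $ i))"

end

theory Submission
  imports Defs "HOL-Library.Multiset"
begin


definition mnm :: "'n::finite multiset \<Rightarrow> real^'n \<Rightarrow> real" where
  "mnm M x = (\<Prod>k\<in>UNIV. x$k ^ count M k)"

definition mf :: "'n::finite \<Rightarrow> 'n multiset \<Rightarrow> 'n vfield" where
  "mf a M = (\<lambda>x. axis a (mnm M x))"

lemma mnm_add: "mnm (M+N) x = mnm M x * mnm N x"
  by (simp add: mnm_def power_add prod.distrib)

lemma mnm_empty[simp]: "mnm {#} x = 1"
  by (simp add: mnm_def)

lemma mnm_single[simp]: "mnm {#a#} x = x$a"
proof -
  have "mnm {#a#} x = (\<Prod>k\<in>UNIV. if k = a then x$k else 1)"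
    unfolding mnm_def by (rule prod.cong) auto
  then show ?thesis by simp
qed

lemma mnm_remove:
  assumes "count M k \<ge> 1"
  shows "mnm M x = x$k * mnm (M - {#k#}) x"
proof -
  have "M = {#k#} + (M - {#k#})" using assms
    by (metis add_mset_remove_trivial_If count_eq_zero_iff not_one_le_zero add_mset_add_single union_commute)
  then show ?thesis by (metis mnm_add mnm_single)
qed

lemma vec_nth_deriv: "((\<lambda>x. x$k) has_derivative (\<lambda>y. y$k)) F"
  by (rule bounded_linear_imp_has_derivative) (rule bounded_linear_vec_nth)

lemma mnm_deriv:
  "(mnm M has_derivative (\<lambda>h. \<Sum>k\<in>UNIV. h$k * (of_nat (count M k) * mnm (M - {#k#}) x))) (at x)"
proof -
  have d: "\<And>k. ((\<lambda>x. x$k ^ count M k) has_derivative (\<lambda>y. of_nat (count M k) * y$k * x$k ^ (count M k - 1))) (at x)"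
    by (rule has_derivative_eq_rhs[OF has_derivative_power[OF vec_nth_deriv]]) auto
  have "((\<lambda>x. \<Prod>k\<in>UNIV. x$k ^ count M k) has_derivative
     (\<lambda>y. \<Sum>i\<in>UNIV. of_nat (count M i) * y$i * x$i ^ (count M i - 1) * (\<Prod>j\<in>UNIV - {i}. x$j ^ count M j))) (at x)"
    by (rule has_derivative_prod) (rule d)
  moreover have "\<And>y. (\<Sum>i\<in>UNIV. of_nat (count M i) * y$i * x$i ^ (count M i - 1) * (\<Prod>j\<in>UNIV - {i}. x$j ^ count M j))
     = (\<Sum>k\<in>UNIV. y$k * (of_nat (count M k) * mnm (M - {#k#}) x))"
  proof (intro sum.cong refl)
    fix y i
    have "mnm (M - {#i#}) x = x$i ^ (count M i - 1) * (\<Prod>j\<in>UNIV - {i}. x$j ^ count M j)"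
      unfolding mnm_def
      by (subst prod.remove[of UNIV i]) (auto intro!: prod.cong)
    then show "of_nat (count M i) * y$i * x$i ^ (count M i - 1) * (\<Prod>j\<in>UNIV - {i}. x$j ^ count M j)
      = y$i * (of_nat (count M i) * mnm (M - {#i#}) x)" by simp
  qed
  ultimately show ?thesis unfolding mnm_def[abs_def] by simp
qed

lemma axis_scale: "axis a (t::real) = t *\<^sub>R axis a 1"
  by (simp add: vec_eq_iff axis_def)

lemma axis_nth_if: "axis a t $ k = (if k = a then t else 0)"
  by (simp add: axis_def)

lemma sum_axis: "(\<Sum>k\<in>UNIV. axis a t $ k * c k) = (t::real) * c a"
proof -
  have "(\<Sum>k\<in>UNIV. axis a t $ k * c k) = (\<Sum>k\<in>UNIV. if k = a then t * c k else 0)"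
    by (rule sum.cong) (auto simp: axis_def)
  then show ?thesis by simp
qed

lemma mf_deriv:
  "(mf a M has_derivative (\<lambda>h. axis a (\<Sum>k\<in>UNIV. h$k * (of_nat (count M k) * mnm (M - {#k#}) x)))) (at x)"
  unfolding mf_def
  apply (subst axis_scale) apply (subst (2) axis_scale)
  by (intro has_derivative_scaleR_left mnm_deriv)

lemma lb:
  assumes "\<And>x. (U has_derivative U' x) (at x)" "\<And>x. (V has_derivative V' x) (at x)"
  shows "lie_bracket U V = (\<lambda>x. V' x (U x) - U' x (V x))"
  unfolding lie_bracket_def
  using frechet_derivative_at[OF assms(1)] frechet_derivative_at[OF assms(2)] by metis

lemma br:
  "lie_bracket (mf a M) (mf b N) = (\<lambda>x. of_nat (count N a) *\<^sub>R mf b (M + (N - {#a#})) x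
       - of_nat (count M b) *\<^sub>R mf a (N + (M - {#b#})) x)"
  apply (subst lb[OF mf_deriv mf_deriv])
  apply (rule ext)
  apply (simp add: mf_def sum_axis mnm_add)
  apply (simp add: vec_eq_iff axis_def)
  done

lemma L_diff: "U \<in> Lie G \<Longrightarrow> V \<in> Lie G \<Longrightarrow> (\<lambda>x. U x - V x) \<in> Lie G"
  using Lie.add[OF _ Lie.scale[of V G "-1"], of U] by simp

lemma L_sum: "finite S \<Longrightarrow> (\<And>j. j \<in> S \<Longrightarrow> F j \<in> Lie G) \<Longrightarrow> (\<lambda>x. \<Sum>j\<in>S. F j x) \<in> Lie G"
proof (induction S rule: finite_induct)
  case empty then show ?case by (simp add: Lie.zero)
next
  case (insert j S)
  then show ?case using Lie.add[of "F j" G "\<lambda>x. \<Sum>j\<in>S. F j x"] by simp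
qed

lemma L_unscale: "(c::real) \<noteq> 0 \<Longrightarrow> (\<lambda>x. c *\<^sub>R U x) \<in> Lie G \<Longrightarrow> U \<in> Lie G"
  using Lie.scale[of "\<lambda>x. c *\<^sub>R U x" G "inverse c"] by simp

lemma msub_add: "count N a \<ge> 1 \<Longrightarrow> M + (N - {#a#}) = M + N - {#a#}"
  by (simp add: multiset_eq_iff)

lemma br_same:
  assumes "count M a + count N a \<ge> 1"
  shows "lie_bracket (mf a M) (mf a N) = (\<lambda>x. (of_nat (count N a) - of_nat (count M a)) *\<^sub>R mf a (M + N - {#a#}) x)"
proof -
  have e1: "count N a \<noteq> 0 \<Longrightarrow> M + (N - {#a#}) = M + N - {#a#}" by (simp add: multiset_eq_iff)
  have e2: "count M a \<noteq> 0 \<Longrightarrow> N + (M - {#a#}) = M + N - {#a#}" by (simp add: multiset_eq_iff)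
  show ?thesis
    unfolding br
  proof (rule ext)
    fix x
    show "real (count N a) *\<^sub>R mf a (M + (N - {#a#})) x - real (count M a) *\<^sub>R mf a (N + (M - {#a#})) x =
         (real (count N a) - real (count M a)) *\<^sub>R mf a (M + N - {#a#}) x"
      using assms e1 e2
      by (cases "count N a = 0"; cases "count M a = 0") (auto simp: algebra_simps)
  qed
qed

lemma from_same:
  assumes "mf a M \<in> Lie G" "mf a N \<in> Lie G" "count M a + count N a \<ge> 1" "M + N - {#a#} = g"
    "real (count N a) \<noteq> real (count M a)"
  shows "mf a g \<in> Lie G"
proof -
  have "lie_bracket (mf a M) (mf a N) \<in> Lie G" using assms by (intro Lie.bracket)
  then have "(\<lambda>x. (of_nat (count N a) - of_nat (count M a)) *\<^sub>R mf a g x) \<in> Lie G"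
    using br_same[OF assms(3)] assms(4) by simp
  then show ?thesis by (rule L_unscale[rotated]) (use assms(5) in simp)
qed

lemma raise:
  fixes G :: "'n::finite vfield set"
  assumes base: "\<And>a M. size M \<le> 2 \<Longrightarrow> mf a M \<in> Lie G"
    and two: "\<And>a::'n. \<exists>c. c \<noteq> a"
  shows "mf a M \<in> Lie G"
proof -
  have "\<forall>a M. size M = d \<longrightarrow> mf a M \<in> Lie G" for d
  proof (induction d)
    case 0 then show ?case using base by simp
  next
    case (Suc d)
    show ?case
    proof (cases "d < 2")
      case True then show ?thesis using base by simp
    next
      case False
      have IH: "size M = d \<Longrightarrow> mf a M \<in> Lie G" for a M using Suc.IH by blast
      have Y: "mf a g \<in> Lie G" if "size g = Suc d" "count g a \<ge> 1" "count g a \<noteq> 3" for a g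
      proof (rule from_same[of a "{#a,a#}" G "g - {#a#}"])
        show "mf a {#a,a#} \<in> Lie G" using base by simp
        have "a \<in># g" using that(2) by (metis count_eq_zero_iff not_one_le_zero)
        then show "mf a (g - {#a#}) \<in> Lie G" using IH that by (simp add: size_Diff_submset)
        show "1 \<le> count {#a, a#} a + count (g - {#a#}) a" by simp
        show "{#a, a#} + (g - {#a#}) - {#a#} = g" using that by (simp add: multiset_eq_iff)
        show "real (count (g - {#a#}) a) \<noteq> real (count {#a, a#} a)" using that by simp
      qed
      have X: "mf a g \<in> Lie G" if "size g = Suc d" "j \<noteq> a" "j \<in># g" "count g a \<noteq> 1" for a g j
      proof (rule from_same[of a "{#a,j#}" G "g - {#j#}"])
        show "mf a {#a,j#} \<in> Lie G" using base by simp
        show "mf a (g - {#j#}) \<in> Lie G" using IH that by (simp add: size_Diff_submset)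
        show "1 \<le> count {#a, j#} a + count (g - {#j#}) a" by simp
        show "{#a, j#} + (g - {#j#}) - {#a#} = g" using that by (simp add: multiset_eq_iff)
        show "real (count (g - {#j#}) a) \<noteq> real (count {#a, j#} a)" using that by simp
      qed
      show ?thesis
      proof (intro allI impI)
        fix a g assume sg: "size (g::'n multiset) = Suc d"
        show "mf a g \<in> Lie G"
        proof (cases "count g a \<ge> 1 \<and> count g a \<noteq> 3")
          case True then show ?thesis using Y sg by blast
        next
          case F1: False
          show ?thesis
          proof (cases "\<exists>j. j \<noteq> a \<and> j \<in># g")
            case True
            then obtain j where "j \<noteq> a" "j \<in># g" by blast
            moreover have "count g a \<noteq> 1" using F1 by (intro notI) simp
            ultimately show ?thesis using X sg by blast
          next
            case False
            then have g0: "\<And>j. j \<noteq> a \<Longrightarrow> count g j = 0" by (auto simp add: not_in_iff)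
            have "count g a \<noteq> 0"
            proof
              assume "count g a = 0"
              then have "g = {#}" using g0 by (metis count_empty multiset_eqI)
              then show False using sg by simp
            qed
            then have c3: "count g a = 3" using F1 by simp
            have gd: "g = {#a,a,a#}" using g0 c3 by (simp add: multiset_eq_iff)
            then have d2: "d = 2" using sg by simp
            obtain c where ca: "c \<noteq> a" using two by blast
            have m1: "mf a {#a,a,c#} \<in> Lie G" using Y[of "{#a,a,c#}" a] ca d2 by simp
            have m2: "mf c {#a,a,c#} \<in> Lie G" using Y[of "{#a,a,c#}" c] ca d2 by simp
            have "lie_bracket (mf c {#a#}) (mf a {#a,a,c#}) \<in> Lie G"
              using base m1 by (intro Lie.bracket) auto
            moreover have "lie_bracket (mf c {#a#}) (mf a {#a,a,c#}) = (\<lambda>x. mf a {#a,a,a#} x - mf c {#a,a,c#} x)"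
              unfolding br using ca by (auto simp: add_mset_commute)
            ultimately have "(\<lambda>x. mf a {#a,a,a#} x - mf c {#a,a,c#} x) \<in> Lie G" by simp
            from Lie.add[OF this m2] show ?thesis using gd by simp
          qed
        qed
      qed
    qed
  qed
  then show ?thesis by blast
qed

lemma mnm_pair[simp]: "mnm {#a,b#} x = x$a * x$b"
  using mnm_add[of "{#a#}" "{#b#}" x] by (simp add: add_mset_commute)

lemma E_deriv: "((\<lambda>x. x$p *\<^sub>R x) has_derivative (\<lambda>h. h$p *\<^sub>R x + x$p *\<^sub>R h)) (at x)"
  by (rule has_derivative_eq_rhs[OF has_derivative_scaleR[OF vec_nth_deriv has_derivative_ident]])
     (auto simp: fun_eq_iff add.commute)

lemma br_CE: "i \<noteq> p \<Longrightarrow> lie_bracket (mf i {#}) (\<lambda>x. x$p *\<^sub>R x) = mf i {#p#}"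
  apply (subst lb[OF mf_deriv E_deriv])
  apply (rule ext)
  apply (simp add: mf_def vec_eq_iff axis_def)
  done

lemma E_sum: "(\<lambda>x. x$k *\<^sub>R x) = (\<lambda>x. \<Sum>j\<in>UNIV. mf j {#k,j#} x)"
proof (rule ext)
  fix x :: "real^'a"
  show "x$k *\<^sub>R x = (\<Sum>j\<in>UNIV. mf j {#k,j#} x)"
  proof (subst vec_eq_iff, intro allI)
    fix i
    have "(\<Sum>j\<in>UNIV. mf j {#k,j#} x) $ i = (\<Sum>j\<in>UNIV. if j = i then x$k * x$j else 0)"
      unfolding sum_component by (rule sum.cong) (auto simp: mf_def axis_def)
    then show "(x$k *\<^sub>R x) $ i = (\<Sum>j\<in>UNIV. mf j {#k,j#} x) $ i" by simp
  qed
qed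

lemma from_br: "U \<in> Lie G \<Longrightarrow> V \<in> Lie G \<Longrightarrow> lie_bracket U V = (\<lambda>x. (c::real) *\<^sub>R W x) \<Longrightarrow> c \<noteq> 0 \<Longrightarrow> W \<in> Lie G"
  using Lie.bracket[of U G V] L_unscale[of c W G] by simp

lemma solve:
  assumes S: "finite S" and E: "(\<lambda>x. w x + (\<Sum>j\<in>S. u j x)) \<in> Lie G"
    and R: "\<And>j. j\<in>S \<Longrightarrow> (\<lambda>x. 2 *\<^sub>R u j x - c j *\<^sub>R w x) \<in> Lie G"
    and c: "\<And>j. j\<in>S \<Longrightarrow> (c j::real) \<ge> 0"
  shows "w \<in> Lie G \<and> (\<forall>j\<in>S. u j \<in> Lie G)"
proof -
  have s: "(\<lambda>x. \<Sum>j\<in>S. (1/2) *\<^sub>R (2 *\<^sub>R u j x - c j *\<^sub>R w x)) \<in> Lie G"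
    using R by (intro L_sum S Lie.scale)
  have "(\<lambda>x. (w x + (\<Sum>j\<in>S. u j x)) - (\<Sum>j\<in>S. (1/2) *\<^sub>R (2 *\<^sub>R u j x - c j *\<^sub>R w x))) \<in> Lie G"
    using L_diff[OF E s] .
  moreover have "\<And>x. (w x + (\<Sum>j\<in>S. u j x)) - (\<Sum>j\<in>S. (1/2) *\<^sub>R (2 *\<^sub>R u j x - c j *\<^sub>R w x))
      = (1 + (\<Sum>j\<in>S. c j) / 2) *\<^sub>R w x"
    by (simp add: scaleR_diff_right sum_subtractf scaleR_sum_left[symmetric] algebra_simps sum_divide_distrib)
  ultimately have "(\<lambda>x. (1 + (\<Sum>j\<in>S. c j) / 2) *\<^sub>R w x) \<in> Lie G" by simp
  moreover have "1 + (\<Sum>j\<in>S. c j) / 2 \<noteq> 0" using sum_nonneg[of S c] c by fastforce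
  ultimately have w: "w \<in> Lie G" using L_unscale by blast
  have "u j \<in> Lie G" if "j \<in> S" for j
  proof -
    have "(\<lambda>x. (2 *\<^sub>R u j x - c j *\<^sub>R w x) + c j *\<^sub>R w x) \<in> Lie G"
      using R[OF that] w by (intro Lie.add Lie.scale)
    then have "(\<lambda>x. 2 *\<^sub>R u j x) \<in> Lie G" by simp
    then show ?thesis using L_unscale[of 2] by simp
  qed
  then show ?thesis using w by blast
qed

lemma quad:
  fixes G :: "'n::finite vfield set" and f l :: 'n
  assumes fl: "f \<noteq> l" and C: "\<And>i. mf i {#} \<in> Lie G"
    and E: "\<And>p. (\<lambda>x. x$p *\<^sub>R x) \<in> Lie G" and V4: "mf f {#l,l#} \<in> Lie G"
    and sz: "size M \<le> 2"
  shows "mf a M \<in> Lie G"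
proof -
  have lin: "mf i {#p#} \<in> Lie G" if "i \<noteq> p" for i p
    using Lie.bracket[OF C E, of i p] br_CE[OF that] by simp
  have C2: "mf i {#l,l#} \<in> Lie G" if "i \<noteq> l" for i
  proof (cases "i = f")
    case True then show ?thesis using V4 by simp
  next
    case False
    show ?thesis
      by (rule from_br[OF lin[OF False] V4, where c="-1::real"]) (use that in \<open>simp_all add: br fun_eq_iff\<close>)
  qed
  have Q1: "mf i {#a,b#} \<in> Lie G" if "i \<noteq> l" "a \<noteq> i" "b \<noteq> i" for i a b
  proof -
    have s1: "mf i {#l,b#} \<in> Lie G" if "b \<noteq> l" "b \<noteq> i" "i \<noteq> l" for b
      by (rule from_br[OF lin[of l b] C2[of i], where c=2])
         (use that in \<open>auto simp add: br fun_eq_iff add_mset_commute\<close>)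
    have s2: "mf i {#a,b#} \<in> Lie G" if "a \<noteq> l" "a \<noteq> i" "b \<noteq> l" "b \<noteq> i" "i \<noteq> l" for a b
      by (rule from_br[OF lin[of l a] s1[of b], where c=1])
         (use that in \<open>auto simp add: br fun_eq_iff add_mset_commute\<close>)
    show ?thesis
    proof (cases "a = l")
      case True
      then show ?thesis
        using C2 s1 that by (cases "b = l") auto
    next
      case False
      then show ?thesis
        using s1[of a] s2 that by (cases "b = l") (auto simp: add_mset_commute)
    qed
  qed
  have Esplit: "(\<lambda>x. x$k *\<^sub>R x) = (\<lambda>x. mf k {#k,k#} x + (\<Sum>j\<in>UNIV-{k}. mf j {#k,j#} x))" for k
    unfolding E_sum by (rule ext) (simp add: sum.remove[of UNIV k])
  have Dl: "mf l {#l,l#} \<in> Lie G \<and> (\<forall>j\<in>UNIV-{l}. mf j {#l,j#} \<in> Lie G)"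
  proof (rule solve[where c="\<lambda>j. 1"])
    show "(\<lambda>x. mf l {#l,l#} x + (\<Sum>j\<in>UNIV-{l}. mf j {#l,j#} x)) \<in> Lie G"
      using E[of l] Esplit[of l] by simp
    fix j assume j: "j \<in> UNIV - {l}"
    show "(\<lambda>x. 2 *\<^sub>R mf j {#l,j#} x - 1 *\<^sub>R mf l {#l,l#} x) \<in> Lie G"
      using Lie.bracket[OF lin[of l j] C2[of j]] j by (simp add: br add_mset_commute)
  qed auto
  have D: "mf j {#k,j#} \<in> Lie G" for j k
  proof (cases "k = l")
    case True
    then show ?thesis using Dl by (cases "j = l") auto
  next
    case False
    have "mf k {#k,k#} \<in> Lie G \<and> (\<forall>j\<in>UNIV-{k}. mf j {#k,j#} \<in> Lie G)"
    proof (rule solve[where c="\<lambda>j. if j = l then 2 else 1"])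
      show "(\<lambda>x. mf k {#k,k#} x + (\<Sum>j\<in>UNIV-{k}. mf j {#k,j#} x)) \<in> Lie G"
        using E[of k] Esplit[of k] by simp
      fix j assume j: "j \<in> UNIV - {k}"
      show "(\<lambda>x. 2 *\<^sub>R mf j {#k,j#} x - (if j = l then 2 else 1) *\<^sub>R mf k {#k,k#} x) \<in> Lie G"
      proof (cases "j = l")
        case True
        have ukl: "mf k {#k,l#} \<in> Lie G" using Dl False by (auto simp: add_mset_commute)
        have "(\<lambda>x. (-2) *\<^sub>R lie_bracket (mf l {#k#}) (mf k {#k,l#}) x) \<in> Lie G"
          using Lie.scale[OF Lie.bracket[OF lin[of l k, OF not_sym[OF False]] ukl], of "-2"] by simp
        moreover have "lie_bracket (mf l {#k#}) (mf k {#k,l#}) = (\<lambda>x. mf k {#k,k#} x - mf l {#k,l#} x)"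
          using False by (simp add: br)
        ultimately have "(\<lambda>x. - (2 *\<^sub>R (mf k {#k,k#} x - mf l {#k,l#} x))) \<in> Lie G" by simp
        moreover have "(\<lambda>x. - (2 *\<^sub>R (mf k {#k,k#} x - mf l {#k,l#} x))) =
           (\<lambda>x. 2 *\<^sub>R mf j {#k,j#} x - (if j = l then 2 else 1) *\<^sub>R mf k {#k,k#} x)"
          using True by (simp add: fun_eq_iff algebra_simps)
        ultimately show ?thesis by simp
      next
        case jl: False
        show ?thesis
          using Lie.bracket[OF lin[of k j] Q1[of j k k]] j jl by (simp add: br add_mset_commute)
      qed
    qed auto
    then show ?thesis using False by (cases "j = k") auto
  qed
  have Q3: "mf l {#a,b#} \<in> Lie G" if "a \<noteq> l" "b \<noteq> l" for a b
    by (rule from_br[OF lin[of l a] D[of l b], where c=1])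
       (use that in \<open>auto simp add: br fun_eq_iff add_mset_commute\<close>)
  have diag: "mf p {#p#} \<in> Lie G" for p
  proof -
    have "\<exists>q. q \<noteq> p" using fl by (cases "p = f") auto
    then obtain q where q: "q \<noteq> p" by blast
    show ?thesis
      by (rule from_br[OF C[of q] D[of p q], where c=1])
         (use q in \<open>auto simp add: br fun_eq_iff add_mset_commute\<close>)
  qed
  show ?thesis
  proof (cases "size M")
    case 0 then show ?thesis using C by simp
  next
    case (Suc n)
    show ?thesis
    proof (cases n)
      case 0
      then obtain p where "M = {#p#}" using Suc size_1_singleton_mset by auto
      then show ?thesis using lin diag by (cases "a = p") auto
    next
      case (Suc n')
      then have "n' = 0" using sz \<open>size M = Suc n\<close> by simp
      obtain p N where MN: "M = add_mset p N" using \<open>size M = Suc n\<close> size_eq_Suc_imp_eq_union by blast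
      then have "size N = 1" using \<open>size M = Suc n\<close> Suc \<open>n' = 0\<close> by simp
      then obtain q where "N = {#q#}" using size_1_singleton_mset by blast
      then have M: "M = {#p,q#}" using MN by simp
      have pq: "{#p,q#} = {#q,p#}" by (rule add_mset_commute)
      show ?thesis
      proof (cases "a = p")
        case True
        then show ?thesis using M D[of a q] pq by simp
      next
        case F1: False
        show ?thesis
        proof (cases "a = q")
          case True
          then show ?thesis using M D[of a p] by simp
        next
          case False
          show ?thesis
          proof (cases "a = l")
            case True
            then show ?thesis using M Q3[of p q] F1 False by simp
          next
            case F3: False
            then show ?thesis using M Q1[of a p q] F1 False by simp
          qed
        qed
      qed
    qed
  qed
qed

definition pl :: "(real \<times> 'n::finite multiset) list \<Rightarrow> real^'n \<Rightarrow> real" where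
  "pl ps x = (\<Sum>(c,M)\<leftarrow>ps. c * mnm M x)"

lemma pl_Nil[simp]: "pl [] x = 0" by (simp add: pl_def)
lemma pl_Cons[simp]: "pl ((c,M)#ps) x = c * mnm M x + pl ps x" by (simp add: pl_def)
lemma pl_append[simp]: "pl (ps@qs) x = pl ps x + pl qs x" by (simp add: pl_def)

lemma pl_mult1: "c * mnm M x * pl qs x = pl (map (\<lambda>(d,N). (c*d, M+N)) qs) x"
  by (induction qs) (auto simp: mnm_add algebra_simps)

lemma pl_mult: "pl ps x * pl qs x = pl (concat (map (\<lambda>(c,M). map (\<lambda>(d,N). (c*d, M+N)) qs) ps)) x"
proof (induction ps)
  case Nil then show ?case by simp
next
  case (Cons p ps)
  obtain c M where p: "p = (c,M)" by fastforce
  show ?case using Cons by (simp add: p distrib_right pl_mult1)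
qed

lemma poly_rep: "poly_fun p \<Longrightarrow> \<exists>ps. p = pl ps"
proof (induction rule: poly_fun.induct)
  case (const c)
  then show ?case by (intro exI[of _ "[(c,{#})]"]) (simp add: fun_eq_iff)
next
  case (coord i)
  then show ?case by (intro exI[of _ "[(1,{#i#})]"]) (simp add: fun_eq_iff)
next
  case (add p q)
  then obtain ps qs where "p = pl ps" "q = pl qs" by blast
  then show ?case by (intro exI[of _ "ps@qs"]) (simp add: fun_eq_iff)
next
  case (mult p q)
  then obtain ps qs where "p = pl ps" "q = pl qs" by blast
  then show ?case by (intro exI[of _ "concat (map (\<lambda>(c,M). map (\<lambda>(d,N). (c*d, M+N)) qs) ps)"])
      (simp add: fun_eq_iff pl_mult)
qed

lemma pl_Lie:
  assumes "\<And>a M. mf a M \<in> Lie G"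
  shows "(\<lambda>x. axis a (pl ps x)) \<in> Lie G"
proof (induction ps)
  case Nil
  then show ?case using Lie.zero[of G] by (simp add: axis_def vec_eq_iff zero_vec_def)
next
  case (Cons p ps)
  obtain c M where p: "p = (c,M)" by fastforce
  have "(\<lambda>x. c *\<^sub>R mf a M x + axis a (pl ps x)) \<in> Lie G"
    using Cons assms by (intro Lie.add Lie.scale)
  moreover have "(\<lambda>x. c *\<^sub>R mf a M x + axis a (pl ps x)) = (\<lambda>x. axis a (pl (p#ps) x))"
    by (simp add: p fun_eq_iff mf_def vec_eq_iff axis_def)
  ultimately show ?case by simp
qed

lemma poly_Lie:
  assumes "\<And>a M. mf a M \<in> Lie G" and "poly_vfield V"
  shows "V \<in> Lie G"
proof -
  have "(\<lambda>x. axis i (V x $ i)) \<in> Lie G" for i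
  proof -
    obtain ps where "(\<lambda>x. V x $ i) = pl ps" using assms(2) poly_rep unfolding poly_vfield_def by blast
    then have "(\<lambda>x. axis i (V x $ i)) = (\<lambda>x. axis i (pl ps x))" by (metis)
    then show ?thesis using pl_Lie[OF assms(1)] by simp
  qed
  then have "(\<lambda>x. \<Sum>i\<in>UNIV. axis i (V x $ i)) \<in> Lie G" by (intro L_sum) auto
  moreover have "(\<lambda>x. \<Sum>i\<in>UNIV. axis i (V x $ i)) = V"
  proof (rule ext)
    fix x
    show "(\<Sum>i\<in>UNIV. axis i (V x $ i)) = V x"
    proof (subst vec_eq_iff, intro allI)
      fix j
      have "(\<Sum>i\<in>UNIV. axis i (V x $ i)) $ j = (\<Sum>i\<in>UNIV. if i = j then V x $ i else 0)"
        unfolding sum_component by (rule sum.cong) (auto simp: axis_def)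
      then show "(\<Sum>i\<in>UNIV. axis i (V x $ i)) $ j = V x $ j" by simp
    qed
  qed
  ultimately show ?thesis by simp
qed



lemma first_ne_last:
  assumes "CARD('n::{finite,linorder}) \<ge> 2"
  shows "first_idx \<noteq> (last_idx::'n)"
proof
  assume eq: "first_idx = (last_idx::'n)"
  have "i = first_idx" for i :: 'n
  proof -
    have "first_idx \<le> i" unfolding first_idx_def by simp
    moreover have "i \<le> last_idx" unfolding last_idx_def by simp
    ultimately show ?thesis using eq by simp
  qed
  then have "UNIV = {first_idx::'n}" by auto
  then have "card (UNIV::'n set) = card {first_idx::'n}" by (rule arg_cong)
  then have "CARD('n) = 1" by simp
  with assms show False by simp
qed

lemma mat_scale: "(M::real^'n::finite^'m::finite) *v (c *\<^sub>R x) = c *\<^sub>R (M *v x)"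
  by (simp add: vec_eq_iff matrix_vector_mult_def sum_distrib_left mult.left_commute)

lemma lin_deriv: "((\<lambda>x. (M::real^'n::finite^'m::finite) *v x) has_derivative (\<lambda>h. M *v h)) (at x)"
  by (rule bounded_linear_imp_has_derivative) (rule matrix_vector_mul_bounded_linear)

theorem proposition2:
  assumes "CARD('n::{finite,linorder}) \<ge> 2"
  shows "\<exists>A B :: real^'n::{finite,linorder}^'n::{finite,linorder}. trace A = 0 \<and> trace B = 0 \<and>
    {V. poly_vfield V} \<subseteq>
      Lie {(\<lambda>x. A *v x),
           (\<lambda>x. B *v x),
           (\<lambda>x. axis last_idx 1),
           (\<lambda>x. axis first_idx ((x $ last_idx)^2)),
           (\<lambda>x. (x $ last_idx) *\<^sub>R x)}"
proof -
  have fl: "first_idx \<noteq> (last_idx::'n)" using first_ne_last[OF assms] .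
  obtain ys where ys: "set ys = UNIV - {last_idx::'n}" "distinct ys"
    using finite_distinct_list[of "UNIV - {last_idx::'n}"] by auto
  define xs where "xs = last_idx # ys"
  have xs: "distinct xs" "set xs = UNIV" "xs!0 = last_idx"
    using ys unfolding xs_def by auto
  define nxt where "nxt i j \<longleftrightarrow> (\<exists>k. Suc k < length xs \<and> i = xs!Suc k \<and> j = xs!k)" for i j :: 'n
  have nxt_iff: "nxt i (xs!k) \<longleftrightarrow> i = xs!Suc k" if "Suc k < length xs" for i k
  proof
    assume "nxt i (xs!k)"
    then obtain k' where k': "Suc k' < length xs" "i = xs!Suc k'" "xs!k = xs!k'" unfolding nxt_def by blast
    then have "k = k'" using nth_eq_iff_index_eq[OF xs(1)] that by auto
    then show "i = xs!Suc k" using k' by simp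
  next
    assume "i = xs!Suc k"
    then show "nxt i (xs!k)" unfolding nxt_def using that by blast
  qed
  have nxt_irr: "\<not> nxt i i" for i
  proof
    assume "nxt i i"
    then obtain k where k: "Suc k < length xs" "xs!Suc k = xs!k" unfolding nxt_def by auto
    then show False using nth_eq_iff_index_eq[OF xs(1), of "Suc k" k] by auto
  qed
  define A where "A = (\<chi> i j. if nxt i j then 1 else (0::real))"
  define B where "B = (\<chi> i j. if nxt j i then 1 else (0::real))"
  have trA: "trace A = 0" unfolding trace_def A_def using nxt_irr by simp
  have trB: "trace B = 0" unfolding trace_def B_def using nxt_irr by simp
  define G where "G = {(\<lambda>x. A *v x),
           (\<lambda>x. B *v x),
           (\<lambda>x. axis last_idx 1),
           (\<lambda>x. axis first_idx ((x $ last_idx)^2)),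
           (\<lambda>x. (x $ last_idx) *\<^sub>R x)}"
  have gA: "(\<lambda>x. A *v x) \<in> Lie G" unfolding G_def by (rule Lie.gen) simp
  have gB: "(\<lambda>x. B *v x) \<in> Lie G" unfolding G_def by (rule Lie.gen) simp
  have g3: "(\<lambda>x. axis last_idx 1) \<in> Lie G" unfolding G_def by (rule Lie.gen) simp
  have g4: "(\<lambda>x. axis first_idx ((x $ last_idx)^2)) \<in> Lie G" unfolding G_def by (rule Lie.gen) simp
  have g5: "(\<lambda>x. (x $ last_idx) *\<^sub>R x) \<in> Lie G" unfolding G_def by (rule Lie.gen) simp
  have Acol: "A *v axis (xs!k) 1 = axis (xs!Suc k) 1" if "Suc k < length xs" for k
    unfolding matrix_vector_mult_basis using that by (simp add: column_def A_def vec_eq_iff nxt_iff axis_def)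
  have Crow: "k < length xs \<longrightarrow> mf (xs!k) {#} \<in> Lie G" for k
  proof (induction k)
    case 0 then show ?case using g3 xs(3) by (simp add: mf_def)
  next
    case (Suc k)
    show ?case
    proof
      assume k: "Suc k < length xs"
      show "mf (xs ! Suc k) {#} \<in> Lie G"
      proof (rule from_br[OF gA, where c="-1::real"])
        show "mf (xs!k) {#} \<in> Lie G" using Suc k by simp
        show "lie_bracket (\<lambda>x. A *v x) (mf (xs ! k) {#}) = (\<lambda>x. (-1::real) *\<^sub>R mf (xs ! Suc k) {#} x)"
          by (subst lb[OF lin_deriv mf_deriv]) (simp add: Acol[OF k] mf_def fun_eq_iff)
      qed simp
    qed
  qed
  have C: "mf i {#} \<in> Lie G" for i
  proof -
    have "i \<in> set xs" using xs(2) by simp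
    then obtain k where "k < length xs" "xs!k = i" by (metis in_set_conv_nth)
    then show ?thesis using Crow by blast
  qed
  have Brow: "(B *v x) $ (xs!k) = x $ (xs!Suc k)" if "Suc k < length xs" for k x
  proof -
    have "(B *v x) $ (xs!k) = (\<Sum>j\<in>UNIV. (if j = xs!Suc k then 1 else 0) * x$j)"
      unfolding matrix_vector_mult_def B_def using that by (simp add: nxt_iff)
    also have "\<dots> = (\<Sum>j\<in>UNIV. if j = xs!Suc k then x$j else 0)" by (rule sum.cong) auto
    finally show ?thesis by simp
  qed
  have Erow: "k < length xs \<longrightarrow> (\<lambda>x. x $ (xs!k) *\<^sub>R x) \<in> Lie G" for k
  proof (induction k)
    case 0 then show ?case using g5 xs(3) by simp
  next
    case (Suc k)
    show ?case
    proof
      assume k: "Suc k < length xs"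
      show "(\<lambda>x. x $ (xs!Suc k) *\<^sub>R x) \<in> Lie G"
      proof (rule from_br[OF gB, where c="1::real"])
        show "(\<lambda>x. x $ (xs!k) *\<^sub>R x) \<in> Lie G" using Suc k by simp
        show "lie_bracket (\<lambda>x. B *v x) (\<lambda>x. x $ (xs!k) *\<^sub>R x) = (\<lambda>x. (1::real) *\<^sub>R (x $ (xs!Suc k) *\<^sub>R x))"
          by (subst lb[OF lin_deriv E_deriv]) (simp add: Brow[OF k] mat_scale fun_eq_iff)
      qed simp
    qed
  qed
  have E: "(\<lambda>x. x $ p *\<^sub>R x) \<in> Lie G" for p
  proof -
    have "p \<in> set xs" using xs(2) by simp
    then obtain k where "k < length xs" "xs!k = p" by (metis in_set_conv_nth)
    then show ?thesis using Erow by blast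
  qed
  have V4: "mf first_idx {#last_idx,last_idx#} \<in> Lie G"
    using g4 by (simp add: mf_def power2_eq_square)
  have two: "\<exists>c. c \<noteq> a" for a :: 'n
  proof (cases "a = first_idx")
    case True then show ?thesis using fl by (intro exI[of _ last_idx]) simp
  next
    case False then show ?thesis by (intro exI[of _ first_idx]) simp
  qed
  have all: "mf a M \<in> Lie G" for a M
    by (rule raise[OF quad[OF fl C E V4] two])
  have "{V. poly_vfield V} \<subseteq> Lie G" using poly_Lie[OF all] by blast
  then show ?thesis using trA trB unfolding G_def by blast
qed

end
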